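(* Let $n\ge2$ and let $\mathcal{S}$ be a set of two-factor interactions among factors $F_1,\dots,F_n$ such that there is no sequence of distinct factors $G_1,\dots,G_m$ ($m\ge3$) with $G_1G_2,\dots,G_{m-1}G_m,G_mG_1\in\mathcal{S}$ (i.e. the requirements graph is acyclic). If every factor appears in at most four interactions of $\mathcal{S}$, then there exists a blocked $2^n$ factorial in blocks of size four whose generator matrix has all columns nonzero (so all main effects are estimable), from which all interactions in $\mathcal{S}$ are estimable, and whose number of estimable two-factor interactions equals $\phi_{\max}=\binom n2-vw-3\binom v2$, where $n=3v+w$, $v=\lfloor n/3\rfloor$, $w\in\{0,1,2\}$.
   Context: A blocked $2^n$ factorial in blocks of size four is specified by a $2\times n$ generator matrix $X$ over $\mathrm{GF}(2)$ of rank $2$: the principal block is the row space of $X$ and the other blocks are its cosets in $\mathrm{GF}(2)^n$. An effect of a set $S$ of factors, with contrast $(-1)^{\sum_{j\in S}x_j}$, is estimable iff its contrast sums to zero over every block; equivalently $F_jF_k$ is estimable iff columns $j,k$ of $X$ differ, and the main effect of $F_j$ is estimable iff column $j$ is nonzero. *)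

theory Defs
  imports Main
begin

text \<open>GF(2) is modelled by bool (addition = exclusive or). Factors are indexed
  0..n-1. A 2 x n generator matrix X over GF(2) is given by its columns:
  X j = (entry in row 1, entry in row 2) of column j (only j < n matter).
  Treatment combinations are vectors x in GF(2)^n, i.e. x :: nat => bool
  with x j = False for j >= n.\<close>

type_synonym genmat = "nat \<Rightarrow> bool \<times> bool"

definition vecs :: "nat \<Rightarrow> (nat \<Rightarrow> bool) set" where
  "vecs n = {x. \<forall>j\<ge>n. \<not> x j}"

definition vadd :: "(nat \<Rightarrow> bool) \<Rightarrow> (nat \<Rightarrow> bool) \<Rightarrow> nat \<Rightarrow> bool" where
  "vadd x y = (\<lambda>j. x j \<noteq> y j)"

definition rank2 :: "nat \<Rightarrow> genmat \<Rightarrow> bool" where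
  "rank2 n X \<longleftrightarrow> (\<forall>a b :: bool.
      (\<forall>j<n. (a \<and> fst (X j)) = (b \<and> snd (X j))) \<longrightarrow> \<not> a \<and> \<not> b)"

text \<open>Principal block = row space of X.\<close>
definition rowspace :: "nat \<Rightarrow> genmat \<Rightarrow> (nat \<Rightarrow> bool) set" where
  "rowspace n X = {(\<lambda>j. j < n \<and> ((a \<and> fst (X j)) \<noteq> (b \<and> snd (X j)))) | a b. True}"

definition block :: "nat \<Rightarrow> genmat \<Rightarrow> (nat \<Rightarrow> bool) \<Rightarrow> (nat \<Rightarrow> bool) set" where
  "block n X x = vadd x ` rowspace n X"

definition contrast :: "nat set \<Rightarrow> (nat \<Rightarrow> bool) \<Rightarrow> int" where
  "contrast S x = (-1) ^ card {j \<in> S. x j}"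

definition estimable :: "nat \<Rightarrow> genmat \<Rightarrow> nat set \<Rightarrow> bool" where
  "estimable n X S \<longleftrightarrow> (\<forall>x \<in> vecs n. (\<Sum>y \<in> block n X x. contrast S y) = 0)"

definition num_est_2fi :: "nat \<Rightarrow> genmat \<Rightarrow> nat" where
  "num_est_2fi n X = card {e. e \<subseteq> {0..<n} \<and> card e = 2 \<and> estimable n X e}"

definition phi_max :: "nat \<Rightarrow> int" where
  "phi_max n = (let v = n div 3; w = n mod 3 in
      int (n choose 2) - int v * int w - 3 * int (v choose 2))"

definition req_acyclic :: "nat set set \<Rightarrow> bool" where
  "req_acyclic S \<longleftrightarrow> \<not> (\<exists>G :: nat list. length G \<ge> 3 \<and> distinct G \<and>
      (\<forall>i < length G - 1. {G ! i, G ! (i+1)} \<in> S) \<and> {last G, hd G} \<in> S)"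

end

theory Submission
  imports Defs
begin

lemma contrast2: "j \<noteq> k \<Longrightarrow> contrast {j,k} y = (if y j then -1 else 1) * (if y k then -1 else 1)"
proof -
  assume "j \<noteq> k"
  have eq: "{i\<in>{j,k}. y i} = (if y j then {j} else {}) \<union> (if y k then {k} else {})" by auto
  show ?thesis unfolding contrast_def eq using \<open>j \<noteq> k\<close> by (cases "y j"; cases "y k"; simp)
qed

lemma est_iff:
  assumes r: "rank2 n X" and "j < n" "k < n" "j \<noteq> k"
  shows "estimable n X {j,k} \<longleftrightarrow> X j \<noteq> X k"
proof -
  define r where "r = (\<lambda>(a::bool,b::bool) i. i < n \<and> ((a \<and> fst (X i)) \<noteq> (b \<and> snd (X i))))"
  have rs: "rowspace n X = r ` UNIV" unfolding rowspace_def r_def by auto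
  have bl: "block n X x = (vadd x \<circ> r) ` UNIV" for x unfolding block_def rs by (simp add: image_comp)
  have inj: "inj (vadd x \<circ> r)" for x
  proof (rule injI)
    fix p q assume h: "(vadd x \<circ> r) p = (vadd x \<circ> r) q"
    obtain a b where p: "p = (a,b)" by (cases p)
    obtain a' b' where q: "q = (a',b')" by (cases q)
    have "\<forall>i<n. ((a \<noteq> a') \<and> fst (X i)) = ((b \<noteq> b') \<and> snd (X i))"
    proof (intro allI impI)
      fix i assume "i < n"
      have "vadd x (r p) i = vadd x (r q) i" using h by simp
      then show "((a \<noteq> a') \<and> fst (X i)) = ((b \<noteq> b') \<and> snd (X i))"
        using \<open>i<n\<close> unfolding vadd_def r_def p q by auto
    qed
    then have "\<not> (a \<noteq> a') \<and> \<not> (b \<noteq> b')" using r unfolding rank2_def by blast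
    then show "p = q" using p q by simp
  qed
  have U: "(UNIV :: (bool \<times> bool) set) = {(True,True),(True,False),(False,True),(False,False)}" by auto
  have sum: "(\<Sum>y \<in> block n X x. contrast {j,k} y) =
     (\<Sum>p \<in> {(True,True),(True,False),(False,True),(False,False)}. contrast {j,k} (vadd x (r p)))" for x
    unfolding bl by (subst sum.reindex[OF inj]) (simp add: U)
  have ev: "(\<Sum>y \<in> block n X x. contrast {j,k} y) =
     (let s = (\<lambda>b. if b then -1 else (1::int)); pj = fst (X j); qj = snd (X j); pk = fst (X k); qk = snd (X k) in
       s (x j) * s (x k) * (s False + s (pj \<noteq> pk) + s (qj \<noteq> qk) + s ((pj \<noteq> qj) \<noteq> (pk \<noteq> qk))))" for x
    unfolding sum using assms(2-4)
    by (cases "x j"; cases "x k"; cases "fst (X j)"; cases "snd (X j)"; cases "fst (X k)"; cases "snd (X k)";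
        simp add: contrast2 vadd_def r_def)
  show ?thesis
  proof
    assume e: "estimable n X {j,k}"
    have "(\<lambda>_. False) \<in> vecs n" by (simp add: vecs_def)
    with e have "(\<Sum>y \<in> block n X (\<lambda>_. False). contrast {j,k} y) = 0" unfolding estimable_def by blast
    then show "X j \<noteq> X k" unfolding ev by (cases "X j"; cases "X k"; auto simp: Let_def split: if_splits)
  next
    assume "X j \<noteq> X k"
    then show "estimable n X {j,k}" unfolding estimable_def ev
      by (cases "X j"; cases "X k"; auto simp: Let_def)
  qed
qed

definition nb :: "nat set set \<Rightarrow> nat set \<Rightarrow> nat \<Rightarrow> nat set" where
  "nb S V v = {u\<in>V. {u,v}\<in>S}"

lemma degen:
  assumes acyc: "req_acyclic S" and edge: "\<forall>e\<in>S. card e = 2"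
    and fin: "finite V" and ne: "V \<noteq> {}"
  shows "\<exists>v\<in>V. card (nb S V v) \<le> 1"
proof (rule ccontr)
  assume "\<not> ?thesis"
  then have H: "\<forall>v\<in>V. 2 \<le> card (nb S V v)" by auto
  have neq: "{u,v} \<in> S \<Longrightarrow> u \<noteq> v" for u v using edge by fastforce
  define P where "P G \<longleftrightarrow> G \<noteq> [] \<and> distinct G \<and> set G \<subseteq> V \<and> (\<forall>i < length G - 1. {G!i, G!(i+1)} \<in> S)" for G
  obtain v0 where v0: "v0 \<in> V" using ne by auto
  have P0: "P [v0]" using v0 by (simp add: P_def)
  have bnd: "\<forall>G. P G \<longrightarrow> length G < card V + 1"
  proof (intro allI impI)
    fix G assume "P G"
    then have "distinct G" "set G \<subseteq> V" by (simp_all add: P_def)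
    then have "length G = card (set G)" "card (set G) \<le> card V"
      using fin by (metis distinct_card, metis card_mono)
    then show "length G < card V + 1" by simp
  qed
  obtain G where PG: "P G" and mx: "\<forall>G'. P G' \<longrightarrow> length G' \<le> length G"
    using ex_has_greatest_nat[of P "[v0]" length "card V + 1", OF P0 bnd] by blast
  define L where "L = length G"
  have L1: "L \<ge> 1" using PG unfolding P_def L_def by (cases G) auto
  define l where "l = last G"
  have lG: "l = G ! (L - 1)" using PG by (simp add: P_def L_def l_def last_conv_nth)
  have lV: "l \<in> V" using PG by (auto simp: P_def l_def)
  have c2: "2 \<le> card (nb S V l)" using H lV by auto
  obtain u where u: "u \<in> nb S V l" and up: "L \<ge> 2 \<longrightarrow> u \<noteq> G ! (L - 2)"
  proof -
    have "nb S V l - {G ! (L - 2)} \<noteq> {}"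
    proof
      assume "nb S V l - {G ! (L - 2)} = {}"
      then have "nb S V l \<subseteq> {G ! (L - 2)}" by auto
      then have "card (nb S V l) \<le> card {G ! (L - 2)}" by (intro card_mono) simp_all
      then have "card (nb S V l) \<le> 1" by simp
      with c2 show False by simp
    qed
    then show ?thesis using that by blast
  qed
  have uV: "u \<in> V" and ul: "{u,l} \<in> S" using u by (auto simp: nb_def)
  have lu: "{l,u} \<in> S" using ul by (simp add: insert_commute)
  have unl: "u \<noteq> l" using neq ul by blast
  show False
  proof (cases "u \<in> set G")
    case False
    have "P (G @ [u])"
      unfolding P_def
    proof (intro conjI allI impI)
      show "G @ [u] \<noteq> []" by simp
      show "distinct (G @ [u])" using PG False by (simp add: P_def)
      show "set (G @ [u]) \<subseteq> V" using PG uV by (simp add: P_def)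
      fix i assume i: "i < length (G @ [u]) - 1"
      show "{(G @ [u]) ! i, (G @ [u]) ! (i + 1)} \<in> S"
      proof (cases "i < L - 1")
        case True
        then have "i + 1 < length G" "i < length G" by (simp_all add: L_def)
        then show ?thesis using PG True by (simp add: P_def L_def nth_append)
      next
        case False
        then have "i = L - 1" using i by (simp add: L_def)
        then have e1: "i + 1 = length G" using L1 by (simp add: L_def)
        have "(G @ [u]) ! (i+1) = u" by (simp only: e1 nth_append_length)
        moreover have "(G @ [u]) ! i = G ! i" using e1 by (simp add: nth_append)
        moreover have "G ! i = l" using lG \<open>i = L - 1\<close> by simp
        ultimately have "(G @ [u]) ! i = l" "(G @ [u]) ! (i+1) = u" by simp_all
        then show ?thesis using lu by simp
      qed
    qed
    then have "length (G @ [u]) \<le> length G" using mx by blast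
    then show False by simp
  next
    case True
    then obtain i where i: "i < L" and ui: "u = G ! i" by (auto simp: in_set_conv_nth L_def)
    have "i \<noteq> L - 1" using unl ui lG by auto
    moreover have "L \<ge> 2 \<longrightarrow> i \<noteq> L - 2" using up ui by auto
    ultimately have i3: "i + 3 \<le> L" using i L1 by (cases "L = 1") auto
    define C where "C = drop i G"
    have "length C \<ge> 3" using i3 by (simp add: C_def L_def)
    moreover have "distinct C" using PG by (simp add: C_def P_def)
    moreover have "\<forall>t < length C - 1. {C!t, C!(t+1)} \<in> S"
    proof (intro allI impI)
      fix t assume "t < length C - 1"
      then have "i + t < length G - 1" by (simp add: C_def)
      then have "{G!(i+t), G!(i+t+1)} \<in> S" using PG by (simp add: P_def)
      then show "{C!t, C!(t+1)} \<in> S" using i3 by (simp add: C_def L_def add.assoc)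
    qed
    moreover have "last C = l" using i by (simp add: C_def l_def L_def)
    moreover have "hd C = u" using i ui by (simp add: C_def L_def hd_drop_conv_nth)
    ultimately have "length C \<ge> 3 \<and> distinct C \<and> (\<forall>t < length C - 1. {C!t, C!(t+1)} \<in> S) \<and> {last C, hd C} \<in> S"
      using lu by simp
    then have "\<exists>G :: nat list. length G \<ge> 3 \<and> distinct G \<and>
      (\<forall>i < length G - 1. {G ! i, G ! (i+1)} \<in> S) \<and> {last G, hd G} \<in> S" by (rule exI[of _ C])
    then show False using acyc unfolding req_acyclic_def by blast
  qed
qed

definition good :: "nat set set \<Rightarrow> nat set \<Rightarrow> nat \<Rightarrow> nat \<Rightarrow> nat \<Rightarrow> bool" where
  "good S W a b c \<longleftrightarrow> a \<in> W \<and> b \<in> W \<and> c \<in> W \<and> a \<noteq> b \<and> a \<noteq> c \<and> b \<noteq> c \<and>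
     nb S (W - {a,b,c}) a = {} \<and> card (nb S (W - {a,b,c}) b) \<le> 1 \<and> card (nb S (W - {a,b,c}) c) \<le> 2"

lemma nb_mono: "V \<subseteq> V' \<Longrightarrow> nb S V v \<subseteq> nb S V' v" by (auto simp: nb_def)
lemma nb_fin: "finite V \<Longrightarrow> finite (nb S V v)" by (simp add: nb_def)
lemma nb_card_mono: "finite V' \<Longrightarrow> V \<subseteq> V' \<Longrightarrow> card (nb S V v) \<le> card (nb S V' v)"
  by (intro card_mono nb_fin nb_mono)

lemma type1:
  assumes dgn: "\<forall>V. finite V \<longrightarrow> V \<noteq> {} \<longrightarrow> (\<exists>v\<in>V. card (nb S V v) \<le> 1)"
    and fin: "finite W" and c3: "3 \<le> card W" and xy: "x \<in> W" "y \<in> W" "x \<noteq> y"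
    and nx: "nb S W x \<subseteq> {y}" and ny: "card (nb S (W - {x}) y) \<le> 1"
  shows "\<exists>a b c. good S W a b c"
proof -
  have "card (W - {x,y}) = card W - 2" using xy fin by (simp add: card_Diff_subset)
  then have "card (W - {x,y}) \<noteq> 0" using c3 by simp
  then have "W - {x,y} \<noteq> {}" by (metis card.empty)
  moreover have "finite (W - {x,y})" using fin by simp
  ultimately obtain c where c: "c \<in> W - {x,y}" and cc: "card (nb S (W - {x,y}) c) \<le> 1"
    using dgn[rule_format, of "W - {x,y}"] by blast
  let ?W' = "W - {x,y,c}"
  have "nb S ?W' x = {}" using nx by (auto simp: nb_def)
  moreover have "card (nb S ?W' y) \<le> 1"
  proof -
    have "card (nb S ?W' y) \<le> card (nb S (W - {x}) y)" by (rule nb_card_mono) (use fin in auto)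
    then show ?thesis using ny by linarith
  qed
  moreover have "card (nb S ?W' c) \<le> 2"
  proof -
    have "card (nb S ?W' c) \<le> card (nb S (W - {x,y}) c)" by (rule nb_card_mono) (use fin in auto)
    then show ?thesis using cc by linarith
  qed
  ultimately have "good S W x y c" using xy c by (auto simp: good_def)
  then show ?thesis by blast
qed

lemma type2:
  assumes dg: "\<forall>V v. finite V \<longrightarrow> card (nb S V v) \<le> 4"
    and fin: "finite W" and xy: "x1 \<in> W" "x2 \<in> W" "y \<in> W" "x1 \<noteq> x2" "x1 \<noteq> y" "x2 \<noteq> y"
    and n1: "nb S W x1 \<subseteq> {y}" and n2: "nb S W x2 \<subseteq> {y}"
    and e1: "{x1,y} \<in> S" and e2: "{x2,y} \<in> S"
  shows "\<exists>a b c. good S W a b c"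
proof -
  let ?W' = "W - {x1,x2,y}"
  have "nb S ?W' x1 = {}" using n1 by (auto simp: nb_def)
  moreover have "nb S ?W' x2 = {}" using n2 by (auto simp: nb_def)
  moreover have "card (nb S ?W' y) \<le> 2"
  proof -
    have s: "{x1,x2} \<subseteq> nb S W y" using xy e1 e2 by (auto simp: nb_def insert_commute)
    have "nb S ?W' y \<subseteq> nb S W y - {x1,x2}" by (auto simp: nb_def)
    then have "card (nb S ?W' y) \<le> card (nb S W y - {x1,x2})"
      using fin by (intro card_mono) (auto simp: nb_fin)
    also have "\<dots> = card (nb S W y) - 2" using s fin xy by (simp add: card_Diff_subset nb_fin)
    also have "\<dots> \<le> 2" using dg[rule_format, of W y] fin by (simp add: le_diff_conv)
    finally show ?thesis .
  qed
  ultimately have "good S W x1 x2 y" using xy by (auto simp: good_def)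
  then show ?thesis by blast
qed

lemma two_elems: "2 \<le> card A \<Longrightarrow> \<exists>a b. a \<in> A \<and> b \<in> A \<and> a \<noteq> b"
proof -
  assume c: "2 \<le> card A"
  then have "finite A" "A \<noteq> {}" by (auto intro: card_ge_0_finite)
  then obtain a where a: "a \<in> A" by auto
  have "card (A - {a}) \<noteq> 0" using c a \<open>finite A\<close> by simp
  then obtain b where "b \<in> A - {a}" by (metis card.empty ex_in_conv)
  then show ?thesis using a by blast
qed

lemma triple:
  assumes dgn: "\<forall>V. finite V \<longrightarrow> V \<noteq> {} \<longrightarrow> (\<exists>v\<in>V. card (nb S V v) \<le> 1)"
    and dg: "\<forall>V v. finite V \<longrightarrow> card (nb S V v) \<le> 4"
    and sng: "\<forall>u. {u} \<notin> S"
    and fin: "finite W" and c3: "3 \<le> card W"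
  shows "\<exists>a b c. good S W a b c"
proof -
  have "W \<noteq> {}" using c3 by auto
  then obtain x where xW: "x \<in> W" and cx: "card (nb S W x) \<le> 1"
    using dgn[rule_format, of W] fin by blast
  have fx: "finite (nb S W x)" using fin by (simp add: nb_fin)
  show ?thesis
  proof (cases "nb S W x = {}")
    case True
    have "card (W - {x}) \<noteq> 0" using c3 xW fin by simp
    then have "W - {x} \<noteq> {}" by (metis card.empty)
    moreover have "finite (W - {x})" using fin by simp
    ultimately obtain y where y: "y \<in> W - {x}" and cy: "card (nb S (W - {x}) y) \<le> 1"
      using dgn[rule_format, of "W - {x}"] by blast
    show ?thesis using type1[OF dgn fin c3 xW, of y] y cy True by auto
  next
    case False
    then have "card (nb S W x) = 1" using cx fx by (simp add: le_Suc_eq card_eq_0_iff)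
    then obtain y where nxy: "nb S W x = {y}" by (auto simp: card_Suc_eq)
    then have yW: "y \<in> W" and eyx: "{y,x} \<in> S" by (auto simp: nb_def)
    have "y \<noteq> x"
    proof
      assume "y = x"
      with nxy have "x \<in> nb S W x" by simp
      then show False using sng by (simp add: nb_def)
    qed
    show ?thesis
    proof (cases "card (nb S (W - {x}) y) \<le> 1")
      case True
      show ?thesis using type1[OF dgn fin c3 xW yW] True nxy \<open>y \<noteq> x\<close> by auto
    next
      case False
      define D where "D = {v\<in>W. card (nb S W v) \<le> 1}"
      define W1 where "W1 = W - D"
      have "card (nb S (W - {x}) y) \<le> card (nb S W y)" by (rule nb_card_mono) (use fin in auto)
      then have "y \<in> W1" using False yW by (auto simp: W1_def D_def)
      then have "W1 \<noteq> {}" by auto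
      moreover have fW1: "finite W1" using fin by (simp add: W1_def)
      ultimately obtain y' where y'W1: "y' \<in> W1" and cy': "card (nb S W1 y') \<le> 1"
        using dgn[rule_format, of W1] by blast
      have y'W: "y' \<in> W" and c2: "2 \<le> card (nb S W y')" using y'W1 by (auto simp: W1_def D_def)
      have fD: "finite D" using fin by (simp add: D_def)
      have Dz: "nb S W z \<subseteq> {y'} \<and> {z,y'} \<in> S \<and> z \<in> W \<and> z \<noteq> y'" if z: "z \<in> nb S D y'" for z
      proof -
        have zD: "z \<in> D" and e: "{z,y'} \<in> S" using z by (auto simp: nb_def)
        have zW: "z \<in> W" and cz: "card (nb S W z) \<le> 1" using zD by (auto simp: D_def)
        have "y' \<in> nb S W z" using y'W e by (simp add: nb_def insert_commute)
        moreover have "finite (nb S W z)" using fin by (simp add: nb_fin)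
        ultimately have "nb S W z \<subseteq> {y'}" using cz
          by (metis card_le_Suc0_iff_eq One_nat_def insert_subsetI singletonI subsetI singletonD)
        moreover have "z \<noteq> y'" using zD y'W1 by (auto simp: W1_def)
        ultimately show ?thesis using e zW by blast
      qed
      have split: "nb S W y' = nb S W1 y' \<union> nb S D y'" by (auto simp: nb_def W1_def D_def)
      show ?thesis
      proof (cases "2 \<le> card (nb S D y')")
        case True
        then obtain x1 x2 where x: "x1 \<in> nb S D y'" "x2 \<in> nb S D y'" "x1 \<noteq> x2"
          using two_elems by blast
        show ?thesis using type2[OF dg fin, of x1 x2 y'] Dz[OF x(1)] Dz[OF x(2)] x(3) y'W by auto
      next
        case False
        have "card (nb S W y') \<le> card (nb S W1 y') + card (nb S D y')"
          unfolding split by (rule card_Un_le)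
        then have "card (nb S D y') \<noteq> 0" using c2 cy' by linarith
        then obtain x'' where x'': "x'' \<in> nb S D y'" by (metis card.empty ex_in_conv)
        have "nb S D y' \<subseteq> {x''}"
          using False x'' fD nb_fin[OF fD, of S y']
          by (metis card_le_Suc0_iff_eq One_nat_def not_less_eq_eq numeral_2_eq_2 subsetI singleton_iff)
        then have "nb S (W - {x''}) y' \<subseteq> nb S W1 y'" using split by (auto simp: nb_def)
        then have "card (nb S (W - {x''}) y') \<le> 1"
          using cy' fW1 by (meson card_mono nb_fin order_trans)
        then show ?thesis using type1[OF dgn fin c3, of x'' y'] Dz[OF x''] y'W by auto
      qed
    qed
  qed
qed

lemma Collect_insert_if: "{t \<in> insert x A. P t} = (if P x then insert x {t\<in>A. P t} else {t\<in>A. P t})"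
  by auto

lemma pick_avoid:
  assumes "finite F" "card F < card (K::nat set)" "finite K"
  shows "\<exists>k\<in>K. k \<notin> F"
proof (rule ccontr)
  assume "\<not> ?thesis"
  then have "K \<subseteq> F" by auto
  then have "card K \<le> card F" using assms(1) by (rule card_mono[rotated])
  then show False using assms(2) by simp
qed

lemma perm3:
  fixes Fb Fc :: "nat set"
  assumes "finite Fb" "finite Fc" "card Fb \<le> 1" "card Fc \<le> 2"
  shows "\<exists>ca cb cc :: nat. cb \<notin> Fb \<and> cc \<notin> Fc \<and>
     (ca,cb,cc) \<in> {(0,1,2),(0,2,1),(1,0,2),(1,2,0),(2,0,1),(2,1,0)}"
proof -
  obtain cc where cc: "cc \<in> {0,1,2}" "cc \<notin> Fc" using pick_avoid[of Fc "{0,1,2}"] assms by auto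
  have "card ({0,1,2::nat} - {cc}) = 2" using cc by auto
  then obtain cb where cb: "cb \<in> {0,1,2} - {cc}" "cb \<notin> Fb"
    using pick_avoid[of Fb "{0,1,2} - {cc}"] assms by auto
  have "(3 - cb - cc, cb, cc) \<in> {(0,1,2),(0,2,1),(1,0,2),(1,2,0),(2,0,1),(2,1,0)}"
    using cb cc by auto
  then show ?thesis using cb cc by blast
qed

lemma three_cases: "(i::nat) < 3 \<Longrightarrow> i = 0 \<or> i = 1 \<or> i = 2" by auto

lemma set3_if: "col a = (ca::nat) \<Longrightarrow> col b = cb \<Longrightarrow> col c = cc \<Longrightarrow> {t\<in>{a,b,c}. col t = i} = (if ca = i then {a} else {}) \<union> (if cb = i then {b} else {}) \<union> (if cc = i then {c} else {})"
  by auto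
lemma card3_if: "(ca,cb,cc) \<in> {(0,1,2),(0,2,1),(1,0,2),(1,2,0),(2,0,1),(2,1,0)} \<Longrightarrow> a \<noteq> b \<Longrightarrow> a\<noteq> c \<Longrightarrow> b \<noteq> c \<Longrightarrow> (i::nat) < 3 \<Longrightarrow>
 card ((if ca = i then {a} else {}) \<union> (if cb = i then {b} else {}) \<union> (if cc = i then {c} else {})) = 1"
  apply (drule three_cases)
  apply (elim insertE emptyE disjE)
  apply (simp_all)
  done

lemma coloring:
  assumes dgn: "\<forall>V. finite V \<longrightarrow> V \<noteq> {} \<longrightarrow> (\<exists>v\<in>V. card (nb S V v) \<le> 1)"
    and dg: "\<forall>V v. finite V \<longrightarrow> card (nb S V v) \<le> 4"
    and sng: "\<forall>u. {u} \<notin> S"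
  shows "\<forall>W::nat set. finite W \<longrightarrow> card W = m \<longrightarrow> (\<exists>col. (\<forall>u\<in>W. \<forall>v\<in>W. {u,v}\<in>S \<longrightarrow> col u \<noteq> col v) \<and> (\<forall>u\<in>W. col u < (3::nat))
     \<and> (\<forall>i<3. card {v\<in>W. col v = i} = (card W + 2 - i) div 3))"
proof (induction m rule: less_induct)
  case (less m)
  show ?case
  proof (intro allI impI)
  fix W :: "nat set" assume finW: "finite W" and cm: "card W = m"
  show "\<exists>col. (\<forall>u\<in>W. \<forall>v\<in>W. {u,v}\<in>S \<longrightarrow> col u \<noteq> col v) \<and> (\<forall>u\<in>W. col u < (3::nat))
     \<and> (\<forall>i<3. card {v\<in>W. col v = i} = (card W + 2 - i) div 3)"
  proof (cases "card W \<le> 2")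
    case True
    then have "card W = 0 \<or> card W = 1 \<or> card W = 2" by auto
    moreover
    { assume "card W = 0"
      then have "W = {}" using finW by simp
      then have ?thesis by simp }
    moreover
    { assume "card W = 1"
      then obtain a where W: "W = {a}" by (auto simp: card_Suc_eq)
      have ?thesis
        by (rule exI[of _ "\<lambda>_. 0"]) (use sng in \<open>auto simp: W dest!: three_cases\<close>)
    }
    moreover
    { assume "card W = 2"
      then obtain a b where W: "W = {a,b}" and ab: "a \<noteq> b" by (auto simp: card_2_iff)
      define col where "col = (\<lambda>v. if v = a then 0 else (1::nat))"
      have e0: "{v\<in>W. col v = 0} = {a}" using W ab by (auto simp: col_def)
      have e1: "{v\<in>W. col v = Suc 0} = {b}" using W ab by (auto simp: col_def)
      have e2: "{v\<in>W. col v = 2} = {}" using W ab by (auto simp: col_def)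
      have p: "\<forall>u\<in>W. \<forall>v\<in>W. {u,v}\<in>S \<longrightarrow> col u \<noteq> col v"
        using W ab sng by (auto simp: col_def)
      have l: "\<forall>u\<in>W. col u < 3" by (simp add: col_def)
      have "\<forall>i<3. card {v\<in>W. col v = i} = (card W + 2 - i) div 3"
        using \<open>card W = 2\<close> by (auto simp: e0 e1 e2 dest!: three_cases)
      then have ?thesis using p l by blast
    }
    ultimately show ?thesis by blast
  next
    case False
    then obtain a b c where g: "good S W a b c" using triple[OF dgn dg sng finW] by auto
    define W' where "W' = W - {a,b,c}"
    have abc: "a \<in> W" "b \<in> W" "c \<in> W" "a \<noteq> b" "a \<noteq> c" "b \<noteq> c" using g by (auto simp: good_def)
    have cW: "card W = card W' + 3" using abc finW False by (simp add: W'_def card_Diff_subset)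
    have fW': "finite W'" using finW by (simp add: W'_def)
    obtain col0 where pr0: "\<forall>u\<in>W'. \<forall>v\<in>W'. {u,v}\<in>S \<longrightarrow> col0 u \<noteq> col0 v"
      and lt0: "\<forall>u\<in>W'. col0 u < 3" and ct0: "\<forall>i<3. card {v\<in>W'. col0 v = i} = (card W' + 2 - i) div 3"
      using less.IH[of "card W'", rule_format, OF _ fW' refl] cW cm by auto
    have na: "nb S W' a = {}" and nbb: "card (nb S W' b) \<le> 1" and nc: "card (nb S W' c) \<le> 2"
      using g by (auto simp: good_def W'_def)
    obtain ca cb cc :: nat where cb: "cb \<notin> col0 ` nb S W' b" and cc: "cc \<notin> col0 ` nb S W' c"
      and perm: "(ca,cb,cc) \<in> {(0,1,2),(0,2,1),(1,0,2),(1,2,0),(2,0,1),(2,1,0)}"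
      using perm3[of "col0 ` nb S W' b" "col0 ` nb S W' c"] nbb nc fW' card_image_le[of "nb S W' b" col0]
        card_image_le[of "nb S W' c" col0] nb_fin[OF fW'] by fastforce
    define col where "col = col0(a := ca, b := cb, c := cc)"
    have colW': "\<forall>v\<in>W'. col v = col0 v" by (auto simp: col_def W'_def)
    have cola: "col a = ca" "col b = cb" "col c = cc" using abc by (auto simp: col_def)
    have cross: "col v \<noteq> col t" if t: "t \<in> {a,b,c}" and v: "v \<in> W'" and e: "{v,t} \<in> S" for t v
    proof -
      have vn: "v \<in> nb S W' t" using v e by (simp add: nb_def)
      then have "col0 v \<in> col0 ` nb S W' t" by (rule imageI)
      moreover have "col v = col0 v" using colW' v by auto
      ultimately have h: "col v \<in> col0 ` nb S W' t" by simp
      from t have "t = a \<or> t = b \<or> t = c" by simp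
      then show ?thesis
      proof (elim disjE)
        assume "t = a" then show ?thesis using vn na by simp
      next
        assume "t = b" then show ?thesis using h cb cola by metis
      next
        assume "t = c" then show ?thesis using h cc cola by metis
      qed
    qed
    have inner: "col u \<noteq> col v" if "u \<in> {a,b,c}" "v \<in> {a,b,c}" "u \<noteq> v" for u v
      using that perm cola abc by auto
    have Wsplit: "W = W' \<union> {a,b,c}" using abc by (auto simp: W'_def)
    have proper: "\<forall>u\<in>W. \<forall>v\<in>W. {u,v}\<in>S \<longrightarrow> col u \<noteq> col v"
    proof (intro ballI impI)
      fix u v assume u: "u \<in> W" and v: "v \<in> W" and e: "{u,v} \<in> S"
      have uv: "u \<noteq> v" using e sng by auto
      have e': "{v,u} \<in> S" using e by (simp add: insert_commute)
      show "col u \<noteq> col v"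
      proof (cases "u \<in> W'")
        case uW: True
        show ?thesis
        proof (cases "v \<in> W'")
          case True then show ?thesis using pr0 uW e colW' by auto
        next
          case False then have "v \<in> {a,b,c}" using v Wsplit by auto
          then show ?thesis using cross[of v u] uW e by auto
        qed
      next
        case False then have uT: "u \<in> {a,b,c}" using u Wsplit by auto
        show ?thesis
        proof (cases "v \<in> W'")
          case True then show ?thesis using cross[of u v] uT e' by auto
        next
          case False then have "v \<in> {a,b,c}" using v Wsplit by auto
          then show ?thesis using inner uT uv by auto
        qed
      qed
    qed
    have lt: "\<forall>u\<in>W. col u < 3" using lt0 colW' Wsplit cola perm by auto
    have ct: "\<forall>i<3. card {v\<in>W. col v = i} = (card W + 2 - i) div 3"
    proof (intro allI impI)
      fix i :: nat assume i: "i < 3"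
      have "{v\<in>W. col v = i} = {v\<in>W'. col0 v = i} \<union> {t\<in>{a,b,c}. col t = i}"
        using Wsplit colW' by auto
      moreover have "card {t\<in>{a,b,c}. col t = i} = 1"
        unfolding set3_if[of col a ca b cb c cc i, OF cola]
        by (rule card3_if[OF perm abc(4-6) i])
      moreover have "{v\<in>W'. col0 v = i} \<inter> {t\<in>{a,b,c}. col t = i} = {}" by (auto simp: W'_def)
      ultimately have "card {v\<in>W. col v = i} = card {v\<in>W'. col0 v = i} + 1"
        using fW' by (simp add: card_Un_disjoint)
      also have "\<dots> = (card W' + 2 - i) div 3 + 1" using ct0 i by simp
      also have "\<dots> = (card W + 2 - i) div 3"
      proof -
        have e: "card W + 2 - i = (card W' + 2 - i) + 3" using cW i by simp
        show ?thesis unfolding e by simp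
      qed
      finally show "card {v\<in>W. col v = i} = (card W + 2 - i) div 3" .
    qed
    show ?thesis using proper lt ct by blast
  qed
  qed
qed

lemma arith3: "(\<Sum>i<3. ((n + 2 - i) div 3 choose 2)) = n div 3 * (n mod 3) + 3 * (n div 3 choose (2::nat))"
proof -
  define v where "v = n div 3"
  define w where "w = n mod 3"
  have n: "n = 3*v + w" unfolding v_def w_def using div_mult_mod_eq[of n 3] by linarith
  have w: "w < 3" by (simp add: w_def)
  have s: "(\<Sum>i<3. ((n + 2 - i) div 3 choose 2)) = ((n+2) div 3 choose 2) + ((n+1) div 3 choose 2) + (n div 3 choose (2::nat))"
  proof -
    have "{..<3::nat} = {0,1,2}" by auto
    then show ?thesis by simp
  qed
  have c: "Suc v choose 2 = (v choose 2) + v" by (simp add: numeral_2_eq_2)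
  have "w = 0 \<or> w = 1 \<or> w = 2" using w by auto
  then have key: "((n+2) div 3 choose 2) + ((n+1) div 3 choose 2) + (n div 3 choose (2::nat)) = v * w + 3 * (v choose 2)"
  proof (elim disjE)
    assume w0: "w = 0"
    have "(n+2) div 3 = v" "(n+1) div 3 = v" "n div 3 = v" unfolding n w0 by simp_all
    then show ?thesis using w0 by simp
  next
    assume w0: "w = 1"
    have "(n+2) div 3 = Suc v" "(n+1) div 3 = v" "n div 3 = v" unfolding n w0 by simp_all
    then show ?thesis using w0 c by simp
  next
    assume w0: "w = 2"
    have "(n+2) div 3 = Suc v" "(n+1) div 3 = Suc v" "n div 3 = v" unfolding n w0 by simp_all
    then show ?thesis using w0 c by simp
  qed
  show ?thesis unfolding s key v_def w_def ..
qed

theorem corollary6: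
  fixes n :: nat and S :: "nat set set"
  assumes "n \<ge> 2"
    and "\<forall>e \<in> S. e \<subseteq> {0..<n} \<and> card e = 2"
    and "req_acyclic S"
    and "\<forall>j < n. card {e \<in> S. j \<in> e} \<le> 4"
  shows "\<exists>X :: genmat. rank2 n X \<and> (\<forall>j < n. X j \<noteq> (False, False))
           \<and> (\<forall>e \<in> S. estimable n X e)
           \<and> int (num_est_2fi n X) = phi_max n"
proof -
  note n2 = assms(1) and Sax = assms(2) and acyc = assms(3) and deg = assms(4)
  have edge: "\<forall>e\<in>S. card e = 2" using Sax by blast
  have sng: "\<forall>u. {u} \<notin> S" using edge by force
  have dgn: "\<forall>V. finite V \<longrightarrow> V \<noteq> {} \<longrightarrow> (\<exists>v\<in>V. card (nb S V v) \<le> 1)"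
    using degen[OF acyc edge] by blast
  have finS: "finite S"
  proof (rule finite_subset)
    show "S \<subseteq> Pow {0..<n}" using Sax by auto
  qed simp
  have dg: "\<forall>V v. finite V \<longrightarrow> card (nb S V v) \<le> 4"
  proof (intro allI impI)
    fix V :: "nat set" and v :: nat assume fV: "finite V"
    show "card (nb S V v) \<le> 4"
    proof (cases "v < n")
      case True
      have "inj_on (\<lambda>u. {u,v}) (nb S V v)"
      proof (rule inj_onI)
        fix u u' assume u: "u \<in> nb S V v" and u': "u' \<in> nb S V v" and e: "{u,v} = {u',v}"
        have "u \<noteq> v" using u sng by (auto simp: nb_def)
        then show "u = u'" using e by (auto simp: doubleton_eq_iff)
      qed
      moreover have "(\<lambda>u. {u,v}) ` nb S V v \<subseteq> {e\<in>S. v \<in> e}" by (auto simp: nb_def)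
      moreover have "finite {e\<in>S. v \<in> e}" using finS by simp
      ultimately have "card (nb S V v) \<le> card {e\<in>S. v \<in> e}" by (rule card_inj_on_le)
      then show ?thesis using deg True by (meson order_trans)
    next
      case False
      have "nb S V v = {}" using False Sax by (fastforce simp: nb_def)
      then show ?thesis by simp
    qed
  qed
  define W where "W = {0..<n}"
  obtain col where pr: "\<forall>u\<in>W. \<forall>v\<in>W. {u,v}\<in>S \<longrightarrow> col u \<noteq> col v"
    and lt: "\<forall>u\<in>W. col u < (3::nat)" and ct: "\<forall>i<3. card {v\<in>W. col v = i} = (card W + 2 - i) div 3"
    using coloring[OF dgn dg sng, of "card W", rule_format, of W] by (auto simp: W_def)
  define X :: genmat where "X = (\<lambda>j. if col j = 0 then (True,False) else if col j = 1 then (False,True) else (True,True))"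
  have Xeq: "X j = X k \<longleftrightarrow> col j = col k" if "j < n" "k < n" for j k
  proof -
    have "col j < 3" "col k < 3" using lt that by (auto simp: W_def)
    then show ?thesis by (auto simp: X_def)
  qed
  have Xnz: "\<forall>j<n. X j \<noteq> (False, False)" by (simp add: X_def)
  have cW: "card W = n" by (simp add: W_def)
  have "card {v\<in>W. col v = 0} \<noteq> 0" using ct n2 cW by auto
  then obtain j0 where j0: "j0 \<in> W" "col j0 = 0" by (metis (mono_tags, lifting) card.empty ex_in_conv mem_Collect_eq)
  have "card {v\<in>W. col v = 1} \<noteq> 0" using ct[rule_format, of 1] n2 cW by auto
  then obtain k0 where k0: "k0 \<in> W" "col k0 = 1" by (metis (mono_tags, lifting) card.empty ex_in_conv mem_Collect_eq)
  have rk: "rank2 n X" unfolding rank2_def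
  proof (intro allI impI)
    fix a b :: bool assume h: "\<forall>j<n. (a \<and> fst (X j)) = (b \<and> snd (X j))"
    have "\<not> a" using h j0 by (auto simp: W_def X_def)
    moreover have "\<not> b" using h k0 by (auto simp: W_def X_def)
    ultimately show "\<not> a \<and> \<not> b" by simp
  qed
  have two: "\<exists>j k. e = {j,k} \<and> j \<noteq> k \<and> j < n \<and> k < n" if "e \<subseteq> {0..<n}" "card e = 2" for e
  proof -
    from that(2) obtain x y where xy: "e = {x,y}" "x \<noteq> y" by (auto simp: card_2_iff)
    then have "x < n" "y < n" using that(1) by auto
    then show ?thesis using xy by blast
  qed
  have estS: "\<forall>e\<in>S. estimable n X e"
  proof
    fix e assume e: "e \<in> S"
    then obtain j k where jk: "e = {j,k}" "j \<noteq> k" "j < n" "k < n" using two Sax by blast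
    have "col j \<noteq> col k" using pr jk e by (auto simp: W_def)
    then show "estimable n X e" using est_iff[OF rk jk(3,4,2)] Xeq jk by simp
  qed
  define A where "A i = {v\<in>W. col v = i}" for i
  define P where "P = {e. e \<subseteq> W \<and> card e = 2}"
  define M where "M = (\<Union>i\<in>{..<3::nat}. {e. e \<subseteq> A i \<and> card e = 2})"
  have setEq: "{e. e \<subseteq> {0..<n} \<and> card e = 2 \<and> estimable n X e} = P - M"
  proof (intro set_eqI iffI)
    fix e assume "e \<in> {e. e \<subseteq> {0..<n} \<and> card e = 2 \<and> estimable n X e}"
    then have e: "e \<subseteq> {0..<n}" "card e = 2" "estimable n X e" by auto
    then obtain j k where jk: "e = {j,k}" "j \<noteq> k" "j < n" "k < n" using two by blast
    have "col j \<noteq> col k" using e(3) est_iff[OF rk jk(3,4,2)] Xeq jk by simp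
    then have "e \<notin> M" using jk by (auto simp: M_def A_def)
    then show "e \<in> P - M" using e by (simp add: P_def W_def)
  next
    fix e assume "e \<in> P - M"
    then have e: "e \<subseteq> {0..<n}" "card e = 2" "e \<notin> M" by (auto simp: P_def W_def)
    then obtain j k where jk: "e = {j,k}" "j \<noteq> k" "j < n" "k < n" using two by blast
    have "col j \<noteq> col k"
    proof
      assume c: "col j = col k"
      have "col j < 3" using lt jk by (simp add: W_def)
      then have "e \<in> M" using c jk e(2) by (auto simp: M_def A_def W_def)
      with e(3) show False by simp
    qed
    then have "estimable n X e" using est_iff[OF rk jk(3,4,2)] Xeq jk by simp
    then show "e \<in> {e. e \<subseteq> {0..<n} \<and> card e = 2 \<and> estimable n X e}" using e by simp
  qed
  have finP: "finite P" unfolding P_def W_def by (rule finite_subset[of _ "Pow {0..<n}"]) auto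
  have MP: "M \<subseteq> P" by (auto simp: M_def P_def A_def)
  have cardP: "card P = n choose 2" unfolding P_def using n_subsets[of W 2] cW by (simp add: W_def)
  have cardM: "card M = (\<Sum>i<3. ((n + 2 - i) div 3 choose 2))"
  proof -
    have "card M = (\<Sum>i<3. card {e. e \<subseteq> A i \<and> card e = 2})"
      unfolding M_def
    proof (rule card_UN_disjoint)
      show "finite {..<3::nat}" by simp
      show "\<forall>i\<in>{..<3::nat}. finite {e. e \<subseteq> A i \<and> card e = 2}"
        by (auto simp: A_def W_def intro: finite_subset[of _ "Pow {0..<n}"])
      show "\<forall>i\<in>{..<3::nat}. \<forall>j\<in>{..<3}. i \<noteq> j \<longrightarrow> {e. e \<subseteq> A i \<and> card e = 2} \<inter> {e. e \<subseteq> A j \<and> card e = 2} = {}"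
      proof (intro ballI impI)
        fix i j :: nat assume "i \<noteq> j"
        show "{e. e \<subseteq> A i \<and> card e = 2} \<inter> {e. e \<subseteq> A j \<and> card e = 2} = {}"
        proof (rule ccontr)
          assume "\<not> ?thesis"
          then obtain e where "e \<subseteq> A i" "e \<subseteq> A j" "card e = 2" by auto
          then obtain x where "x \<in> A i" "x \<in> A j" by (auto simp: card_2_iff)
          with \<open>i \<noteq> j\<close> show False by (simp add: A_def)
        qed
      qed
    qed
    also have "\<dots> = (\<Sum>i<3. card (A i) choose 2)"
      by (intro sum.cong refl n_subsets) (simp add: A_def W_def)
    also have "\<dots> = (\<Sum>i<3. ((n + 2 - i) div 3 choose 2))"
      by (intro sum.cong refl) (use ct cW in \<open>simp add: A_def\<close>)
    finally show ?thesis .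
  qed
  have num: "num_est_2fi n X = (n choose 2) - (\<Sum>i<3. ((n + 2 - i) div 3 choose 2))"
    unfolding num_est_2fi_def setEq using finP MP cardP cardM by (simp add: card_Diff_subset finite_subset)
  have le: "(\<Sum>i<3. ((n + 2 - i) div 3 choose 2)) \<le> n choose 2"
    using card_mono[OF finP MP] cardP cardM by simp
  have "int (num_est_2fi n X) = phi_max n"
    unfolding num phi_max_def Let_def using le arith3[of n] by (simp add: of_nat_diff)
  then show ?thesis using rk Xnz estS by blast
qed

end
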